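(* Let $\mathcal H=\bigoplus_{n\ge 0}\mathcal H_n$ be a commutative graded connected Hopf algebra over $\mathbb C$ (so $\mathcal H_0=\mathbb C\cdot 1$), and for $X\in\mathcal H_n$, $n\ge1$, write the coproduct as $$\Delta(X)=X\otimes 1+1\otimes X+\sum X'\otimes X'',$$ where $\sum X'\otimes X''\in\bigoplus_{1\le p\le n-1}\mathcal H_p\otimes\mathcal H_{n-p}$. Let $\phi:\mathcal H\to\mathcal R$ be a unital algebra homomorphism. Define linear maps $\phi_-,\phi_+:\mathcal H\to\mathcal R$ by $\phi_\pm(1)=1$ and, recursively on the degree, for homogeneous $X$ of degree $\ge1$, $$\phi_-(X)=-T\Big(\phi(X)+\sum\phi_-(X')\,\phi(X'')\Big),\qquad \phi_+(X)=\phi(X)+\phi_-(X)+\sum\phi_-(X')\,\phi(X'').$$ Then $\phi_-$ and $\phi_+$ are unital algebra homomorphisms, $\phi_-(X)\in\mathcal R_-$ for every $X$ of positive degree, $\phi_+(\mathcal H)\subset\mathcal R_+$, and $\phi_+=\phi_-\star\phi$. Equivalently, in terms of the corresponding loops with values in the group $G$ of characters of $\mathcal H$, the loop $\gamma$ associated with $\phi$ admits the Birkhoff decomposition $\gamma(z)=\gamma_-(z)^{-1}\gamma_+(z)$, where $\gamma_\pm$ correspond to $\phi_\pm$.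
   Context: Fix $z_0\in\mathbb C$. $\mathcal R$ denotes the algebra of germs at $z_0$ of meromorphic functions of the complex variable $z$; $\mathcal R_+\subset\mathcal R$ is the subalgebra of germs holomorphic at $z_0$, and $\mathcal R_-=(z-z_0)^{-1}\mathbb C[(z-z_0)^{-1}]$ is the space of polynomials in $(z-z_0)^{-1}$ without constant term, so that $\mathcal R=\mathcal R_-\oplus\mathcal R_+$. $T:\mathcal R\to\mathcal R_-$ is the projection onto $\mathcal R_-$ parallel to $\mathcal R_+$ (extraction of the polar part). The convolution of linear maps $\psi_1,\psi_2:\mathcal H\to\mathcal R$ is $\psi_1\star\psi_2=m\circ(\psi_1\otimes\psi_2)\circ\Delta$, where $m$ is the multiplication of $\mathcal R$. Algebra homomorphisms $\mathcal H\to\mathcal R$ correspond to (germs of) meromorphic loops $z\mapsto\gamma(z)$ in the group $G$ of characters of $\mathcal H$, convolution corresponding to pointwise product of loops; $\phi(\mathcal H_{>0})\subset \mathcal R_-$ means the loop extends holomorphically to $\mathbb C\setminus\{z_0\}$ with value $1$ at $\infty$, and $\phi(\mathcal H)\subset\mathcal R_+$ means the loop is holomorphic at $z_0$. *)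

theory Defs
  imports "HOL-Complex_Analysis.Complex_Analysis" "HOL-Library.Poly_Mapping"
begin

text \<open>A complex vector space with basis indexed by the type 'a is represented as the
  finitely supported functions 'a to complex. The tensor product of the spaces with bases
  'a and 'b is then the space with basis 'a times 'b.\<close>

definition pm_smult :: "complex \<Rightarrow> ('a \<Rightarrow>\<^sub>0 complex) \<Rightarrow> ('a \<Rightarrow>\<^sub>0 complex)" where
  "pm_smult c p = Poly_Mapping.map (\<lambda>v. c * v) p"

definition pm_lext :: "('a \<Rightarrow> ('c \<Rightarrow>\<^sub>0 complex)) \<Rightarrow> ('a \<Rightarrow>\<^sub>0 complex) \<Rightarrow> ('c \<Rightarrow>\<^sub>0 complex)" where
  "pm_lext f x = (\<Sum>a\<in>Poly_Mapping.keys x. pm_smult (Poly_Mapping.lookup x a) (f a))"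

definition bvec :: "'a \<Rightarrow> ('a \<Rightarrow>\<^sub>0 complex)" where
  "bvec a = Poly_Mapping.single a 1"

definition c_lext :: "('a \<Rightarrow> complex) \<Rightarrow> ('a \<Rightarrow>\<^sub>0 complex) \<Rightarrow> complex" where
  "c_lext f x = (\<Sum>a\<in>Poly_Mapping.keys x. Poly_Mapping.lookup x a * f a)"

definition tens :: "('a \<Rightarrow>\<^sub>0 complex) \<Rightarrow> ('b \<Rightarrow>\<^sub>0 complex) \<Rightarrow> ('a \<times> 'b \<Rightarrow>\<^sub>0 complex)" where
  "tens x y = pm_lext (\<lambda>a. pm_lext (\<lambda>b. bvec (a, b)) y) x"

definition hmul :: "('b \<Rightarrow> 'b \<Rightarrow> ('b \<Rightarrow>\<^sub>0 complex)) \<Rightarrow> ('b \<Rightarrow>\<^sub>0 complex) \<Rightarrow> ('b \<Rightarrow>\<^sub>0 complex) \<Rightarrow> ('b \<Rightarrow>\<^sub>0 complex)" where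
  "hmul mu x y = pm_lext (\<lambda>a. pm_lext (\<lambda>b. mu a b) y) x"

definition tmul :: "('b \<Rightarrow> 'b \<Rightarrow> ('b \<Rightarrow>\<^sub>0 complex)) \<Rightarrow> ('b \<times> 'b \<Rightarrow>\<^sub>0 complex) \<Rightarrow> ('b \<times> 'b \<Rightarrow>\<^sub>0 complex) \<Rightarrow> ('b \<times> 'b \<Rightarrow>\<^sub>0 complex)" where
  "tmul mu s t = pm_lext (\<lambda>(a, b). pm_lext (\<lambda>(c, d). tens (mu a c) (mu b d)) t) s"

definition Delta :: "('b \<Rightarrow> ('b \<times> 'b \<Rightarrow>\<^sub>0 complex)) \<Rightarrow> ('b \<Rightarrow>\<^sub>0 complex) \<Rightarrow> ('b \<times> 'b \<Rightarrow>\<^sub>0 complex)" where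
  "Delta cop x = pm_lext cop x"

definition Delta_id :: "('b \<Rightarrow> ('b \<times> 'b \<Rightarrow>\<^sub>0 complex)) \<Rightarrow> ('b \<times> 'b \<Rightarrow>\<^sub>0 complex) \<Rightarrow> ('b \<times> 'b \<times> 'b \<Rightarrow>\<^sub>0 complex)" where
  "Delta_id cop t = pm_lext (\<lambda>(u, v). pm_lext (\<lambda>(p, q). bvec (p, q, v)) (cop u)) t"

definition id_Delta :: "('b \<Rightarrow> ('b \<times> 'b \<Rightarrow>\<^sub>0 complex)) \<Rightarrow> ('b \<times> 'b \<Rightarrow>\<^sub>0 complex) \<Rightarrow> ('b \<times> 'b \<times> 'b \<Rightarrow>\<^sub>0 complex)" where
  "id_Delta cop t = pm_lext (\<lambda>(u, v). pm_lext (\<lambda>(p, q). bvec (u, p, q)) (cop v)) t"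

text \<open>A commutative graded connected Hopf algebra over the complex numbers, given by a
  homogeneous basis indexed by 'b with degree function deg; e is the basis vector equal to
  the unit 1; mu, cop, cou, ant give product, coproduct, counit and antipode on basis
  vectors.\<close>
definition graded_connected_comm_hopf ::
  "('b \<Rightarrow> nat) \<Rightarrow> ('b \<Rightarrow> 'b \<Rightarrow> ('b \<Rightarrow>\<^sub>0 complex)) \<Rightarrow> 'b \<Rightarrow> ('b \<Rightarrow> ('b \<times> 'b \<Rightarrow>\<^sub>0 complex))
    \<Rightarrow> ('b \<Rightarrow> complex) \<Rightarrow> ('b \<Rightarrow> ('b \<Rightarrow>\<^sub>0 complex)) \<Rightarrow> bool" where
  "graded_connected_comm_hopf deg mu e cop cou ant \<longleftrightarrow>
     \<comment> \<open>commutative unital associative algebra\<close>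
     (\<forall>x y z. hmul mu (hmul mu x y) z = hmul mu x (hmul mu y z)) \<and>
     (\<forall>x y. hmul mu x y = hmul mu y x) \<and>
     (\<forall>x. hmul mu (bvec e) x = x) \<and>
     \<comment> \<open>grading, connectedness\<close>
     (\<forall>a b. \<forall>c\<in>Poly_Mapping.keys (mu a b). deg c = deg a + deg b) \<and>
     (\<forall>b. deg b = 0 \<longleftrightarrow> b = e) \<and>
     (\<forall>b. \<forall>(u, v)\<in>Poly_Mapping.keys (cop b). deg u + deg v = deg b) \<and>
     \<comment> \<open>coalgebra\<close>
     (\<forall>x. Delta_id cop (Delta cop x) = id_Delta cop (Delta cop x)) \<and>
     (\<forall>x. pm_lext (\<lambda>(u, v). pm_smult (cou u) (bvec v)) (Delta cop x) = x) \<and>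
     (\<forall>x. pm_lext (\<lambda>(u, v). pm_smult (cou v) (bvec u)) (Delta cop x) = x) \<and>
     \<comment> \<open>bialgebra compatibility\<close>
     (\<forall>x y. Delta cop (hmul mu x y) = tmul mu (Delta cop x) (Delta cop y)) \<and>
     Delta cop (bvec e) = bvec (e, e) \<and>
     (\<forall>x y. c_lext cou (hmul mu x y) = c_lext cou x * c_lext cou y) \<and>
     cou e = 1 \<and>
     \<comment> \<open>antipode\<close>
     (\<forall>x. pm_lext (\<lambda>(u, v). hmul mu (ant u) (bvec v)) (Delta cop x)
            = pm_smult (c_lext cou x) (bvec e)) \<and>
     (\<forall>x. pm_lext (\<lambda>(u, v). hmul mu (bvec u) (ant v)) (Delta cop x)
            = pm_smult (c_lext cou x) (bvec e))"

text \<open>Reduced coproduct: Delta(b) - b (x) 1 - 1 (x) b, i.e. the sum of X' (x) X''.\<close>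
definition red_cop :: "('b \<Rightarrow> ('b \<times> 'b \<Rightarrow>\<^sub>0 complex)) \<Rightarrow> 'b \<Rightarrow> 'b \<Rightarrow> ('b \<times> 'b \<Rightarrow>\<^sub>0 complex)" where
  "red_cop cop e b = cop b - bvec (b, e) - bvec (e, b)"

text \<open>A germ at z0 of a meromorphic function is identified with its Laurent expansion in
  powers of (z - z0), a complex formal Laurent series (fls_X corresponds to z - z0).\<close>
definition germs :: "complex \<Rightarrow> complex fls set" where
  "germs z0 = {F. \<exists>f. (\<lambda>w. f (z0 + w)) has_laurent_expansion F}"

definition Rplus :: "complex \<Rightarrow> complex fls set" where
  "Rplus z0 = {F \<in> germs z0. \<forall>n::int. n < 0 \<longrightarrow> fls_nth F n = 0}"

text \<open>R_- : polynomials in (z - z0)^(-1) without constant term.\<close>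
definition Rminus :: "complex \<Rightarrow> complex fls set" where
  "Rminus z0 = {F \<in> germs z0. \<forall>n::int. n \<ge> 0 \<longrightarrow> fls_nth F n = 0}"

text \<open>T: projection onto R_- parallel to R_+ (polar part).\<close>
definition T :: "complex fls \<Rightarrow> complex fls" where
  "T F = F - fps_to_fls (fls_regpart F)"

definition r_lext :: "('b \<Rightarrow> complex fls) \<Rightarrow> ('b \<Rightarrow>\<^sub>0 complex) \<Rightarrow> complex fls" where
  "r_lext f x = (\<Sum>a\<in>Poly_Mapping.keys x. fls_const (Poly_Mapping.lookup x a) * f a)"

definition m_tensor :: "('b \<Rightarrow> complex fls) \<Rightarrow> ('b \<Rightarrow> complex fls) \<Rightarrow> ('b \<times> 'b \<Rightarrow>\<^sub>0 complex) \<Rightarrow> complex fls" where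
  "m_tensor f g t = (\<Sum>p\<in>Poly_Mapping.keys t. fls_const (Poly_Mapping.lookup t p) * f (fst p) * g (snd p))"

definition convolution :: "('b \<Rightarrow> ('b \<times> 'b \<Rightarrow>\<^sub>0 complex)) \<Rightarrow> ('b \<Rightarrow> complex fls) \<Rightarrow> ('b \<Rightarrow> complex fls)
    \<Rightarrow> ('b \<Rightarrow>\<^sub>0 complex) \<Rightarrow> complex fls" where
  "convolution cop f g x = m_tensor f g (Delta cop x)"

definition unital_alg_hom_R :: "complex \<Rightarrow> ('b \<Rightarrow> 'b \<Rightarrow> ('b \<Rightarrow>\<^sub>0 complex)) \<Rightarrow> 'b \<Rightarrow> ('b \<Rightarrow> complex fls) \<Rightarrow> bool" where
  "unital_alg_hom_R z0 mu e f \<longleftrightarrow>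
     (\<forall>b. f b \<in> germs z0) \<and>
     r_lext f (bvec e) = 1 \<and>
     (\<forall>x y. r_lext f (hmul mu x y) = r_lext f x * r_lext f y)"

end

theory Submission
  imports Defs
begin


lemma lookup_smult[simp]: "Poly_Mapping.lookup (pm_smult c p) k = c * Poly_Mapping.lookup p k"
  by (simp add: pm_smult_def Poly_Mapping.map.rep_eq when_def)

lemma keys_smult: "Poly_Mapping.keys (pm_smult c p) \<subseteq> Poly_Mapping.keys p"
  by (auto simp: in_keys_iff)

lemma lookup_bvec: "Poly_Mapping.lookup (bvec a) k = (if k = a then 1 else 0)"
  by (auto simp: bvec_def lookup_single)

lemma keys_bvec[simp]: "Poly_Mapping.keys (bvec a) = {a}"
  by (simp add: bvec_def)

lemma pm_smult_one[simp]: "pm_smult 1 v = v"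
  by (rule poly_mapping_eqI) simp

lemma pm_smult_zero[simp]: "pm_smult 0 v = 0"
  by (rule poly_mapping_eqI) simp

lemma pm_lext_bvec[simp]: "pm_lext f (bvec a) = f a"
  by (simp add: pm_lext_def lookup_bvec)

lemma fls_const_add: "fls_const (a + b) = fls_const a + (fls_const b :: complex fls)"
  by (rule fls_eqI) simp

lemma fls_const_diff: "fls_const (a - b) = fls_const a - (fls_const b :: complex fls)"
  by (rule fls_eqI) simp

lemma r_lext_sup:
  assumes "finite S" "Poly_Mapping.keys x \<subseteq> S"
  shows "r_lext f x = (\<Sum>a\<in>S. fls_const (Poly_Mapping.lookup x a) * f a)"
  unfolding r_lext_def
  by (rule sum.mono_neutral_left) (use assms in \<open>auto simp: in_keys_iff\<close>)

lemma r_lext_bvec[simp]: "r_lext f (bvec a) = f a"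
  by (simp add: r_lext_def lookup_bvec)

lemma r_lext_zero[simp]: "r_lext f 0 = 0"
  by (simp add: r_lext_def)

lemma r_lext_add: "r_lext f (x + y) = r_lext f x + r_lext f y"
proof -
  let ?S = "Poly_Mapping.keys x \<union> Poly_Mapping.keys y"
  have "r_lext f (x + y) = (\<Sum>a\<in>?S. fls_const (Poly_Mapping.lookup (x+y) a) * f a)"
    using keys_add[of x y] by (intro r_lext_sup) auto
  also have "\<dots> = (\<Sum>a\<in>?S. fls_const (Poly_Mapping.lookup x a) * f a) + (\<Sum>a\<in>?S. fls_const (Poly_Mapping.lookup y a) * f a)"
    by (simp add: lookup_add sum.distrib distrib_right fls_const_add)
  also have "\<dots> = r_lext f x + r_lext f y"
    by (simp add: r_lext_sup[symmetric])
  finally show ?thesis .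
qed

lemma r_lext_diff: "r_lext f (x - y) = r_lext f x - r_lext f y"
proof -
  let ?S = "Poly_Mapping.keys x \<union> Poly_Mapping.keys y"
  have "r_lext f (x - y) = (\<Sum>a\<in>?S. fls_const (Poly_Mapping.lookup (x-y) a) * f a)"
    by (rule r_lext_sup) (auto simp: in_keys_iff lookup_minus)
  also have "\<dots> = (\<Sum>a\<in>?S. fls_const (Poly_Mapping.lookup x a) * f a) - (\<Sum>a\<in>?S. fls_const (Poly_Mapping.lookup y a) * f a)"
    by (simp add: lookup_minus sum_subtractf left_diff_distrib fls_const_diff)
  also have "\<dots> = r_lext f x - r_lext f y"
    by (simp add: r_lext_sup[symmetric])
  finally show ?thesis .
qed

lemma r_lext_smult: "r_lext f (pm_smult c x) = fls_const c * r_lext f x"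
proof -
  have "r_lext f (pm_smult c x) = (\<Sum>a\<in>Poly_Mapping.keys x. fls_const (Poly_Mapping.lookup (pm_smult c x) a) * f a)"
    by (rule r_lext_sup) (auto simp: in_keys_iff)
  also have "\<dots> = fls_const c * r_lext f x"
    by (simp add: r_lext_def sum_distrib_left mult.assoc flip: fls_const_mult_const)
  finally show ?thesis .
qed

lemma r_lext_sum: "r_lext f (sum g A) = (\<Sum>a\<in>A. r_lext f (g a))"
  by (induction A rule: infinite_finite_induct) (auto simp: r_lext_add)

lemma r_lext_pm_lext: "r_lext f (pm_lext g x) = r_lext (\<lambda>a. r_lext f (g a)) x"
  by (simp add: pm_lext_def r_lext_sum r_lext_smult) (simp add: r_lext_def)

lemma r_lext_cong: "(\<And>a. a \<in> Poly_Mapping.keys x \<Longrightarrow> f a = g a) \<Longrightarrow> r_lext f x = r_lext g x"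
  by (simp add: r_lext_def)

lemma r_lext_cmult: "r_lext (\<lambda>a. c * f a) x = c * r_lext f x"
  by (simp add: r_lext_def sum_distrib_left mult.left_commute)

lemma r_lext_multc: "r_lext (\<lambda>a. f a * c) x = r_lext f x * c"
  by (simp add: r_lext_def sum_distrib_right mult.assoc)

lemma r_lext_fadd: "r_lext (\<lambda>a. f a + g a) x = r_lext f x + r_lext g x"
  by (simp add: r_lext_def sum.distrib distrib_left)

lemma r_lext_fdiff: "r_lext (\<lambda>a. f a - g a) x = r_lext f x - r_lext g x"
  by (simp add: r_lext_def sum_subtractf right_diff_distrib)

lemma r_lext_fminus: "r_lext (\<lambda>a. - f a) x = - r_lext f x"
  by (simp add: r_lext_def sum_negf)

lemma m_tensor_eq: "m_tensor f g t = r_lext (\<lambda>p. f (fst p) * g (snd p)) t"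
  by (simp add: m_tensor_def r_lext_def mult.assoc)

lemma r_lext_tens: "r_lext h (tens x y) = r_lext (\<lambda>a. r_lext (\<lambda>b. h (a, b)) y) x"
  by (simp add: tens_def r_lext_pm_lext)

lemma r_lext_prod: "r_lext (\<lambda>a. r_lext (\<lambda>b. F a * G b) y) x = r_lext F x * r_lext G y"
  by (simp add: r_lext_cmult r_lext_multc)

lemma hmul_bvec: "hmul mu (bvec a) (bvec b) = mu a b"
  by (simp add: hmul_def)

lemma r_lext_hmul:
  "r_lext h (hmul mu x y) = r_lext (\<lambda>a. r_lext (\<lambda>b. r_lext h (mu a b)) y) x"
  by (simp add: hmul_def r_lext_pm_lext)

lemma m_tensor_tmul:
  "m_tensor f g (tmul mu s t) = r_lext (\<lambda>p. r_lext (\<lambda>q. r_lext f (mu (fst p) (fst q)) * r_lext g (mu (snd p) (snd q))) t) s"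
  unfolding tmul_def m_tensor_eq
  by (simp add: r_lext_pm_lext case_prod_beta r_lext_tens r_lext_prod)




lemma T_nth: "fls_nth (T F) n = (if n < 0 then fls_nth F n else 0)"
  by (simp add: T_def)

lemma T_add: "T (F + G) = T F + T G" by (rule fls_eqI) (simp add: T_nth)
lemma T_diff: "T (F - G) = T F - T G" by (rule fls_eqI) (simp add: T_nth)
lemma T_uminus: "T (- F) = - T F" by (rule fls_eqI) (simp add: T_nth)
lemma T_zero[simp]: "T 0 = 0" by (rule fls_eqI) (simp add: T_nth)
lemma T_cmult: "T (fls_const c * F) = fls_const c * T F" by (rule fls_eqI) (simp add: T_nth)
lemma T_sum: "T (sum f A) = (\<Sum>a\<in>A. T (f a))"
  by (induction A rule: infinite_finite_induct) (auto simp: T_add)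

lemma r_lext_T: "r_lext (\<lambda>a. T (f a)) x = T (r_lext f x)"
  by (simp add: r_lext_def T_sum T_cmult)

definition POS :: "complex fls \<Rightarrow> bool" where "POS F \<longleftrightarrow> (\<forall>n<0. fls_nth F n = 0)"
definition NEG :: "complex fls \<Rightarrow> bool" where "NEG F \<longleftrightarrow> (\<forall>n\<ge>0. fls_nth F n = 0)"

lemma NEG_T: "NEG (T F)" by (simp add: NEG_def T_nth)
lemma NEG_uminus: "NEG F \<Longrightarrow> NEG (- F)" by (simp add: NEG_def)
lemma POS_sub_T: "POS (F - T F)" by (simp add: POS_def T_nth)

lemma T_POS_mult: assumes "POS F" "POS G" shows "T (F * G) = 0"
proof (rule fls_eqI)
  fix n :: int
  show "fls_nth (T (F * G)) n = fls_nth 0 n"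
  proof (cases "n < 0")
    case True
    have "fls_nth (F * G) n = (\<Sum>i=fls_subdegree F..n - fls_subdegree G. fls_nth F i * fls_nth G (n - i))"
      by (rule fls_times_nth(2))
    also have "\<dots> = 0"
      proof (intro sum.neutral ballI)
      fix i assume "i \<in> {fls_subdegree F..n - fls_subdegree G}"
      show "fls_nth F i * fls_nth G (n - i) = 0"
      proof (cases "i < 0")
        case True then show ?thesis using assms(1) by (simp add: POS_def)
      next
        case False then have "n - i < 0" using \<open>n < 0\<close> by simp
        then show ?thesis using assms(2) by (simp add: POS_def)
      qed
    qed
    finally show ?thesis using True by (simp add: T_nth)
  qed (simp add: T_nth)
qed

lemma T_NEG_mult: assumes "NEG F" "NEG G" shows "T (F * G) = F * G"
proof (rule fls_eqI)
  fix n :: int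
  show "fls_nth (T (F * G)) n = fls_nth (F * G) n"
  proof (cases "n < 0")
    case False
    have "fls_nth (F * G) n = (\<Sum>i=fls_subdegree F..n - fls_subdegree G. fls_nth F i * fls_nth G (n - i))"
      by (rule fls_times_nth(2))
    also have "\<dots> = 0"
      proof (intro sum.neutral ballI)
      fix i assume "i \<in> {fls_subdegree F..n - fls_subdegree G}"
      show "fls_nth F i * fls_nth G (n - i) = 0"
      proof (cases "i \<ge> 0")
        case True then show ?thesis using assms(1) by (simp add: NEG_def)
      next
        case False then have "n - i \<ge> 0" using \<open>\<not> n < 0\<close> by simp
        then show ?thesis using assms(2) by (simp add: NEG_def)
      qed
    qed
    finally show ?thesis using False by (simp add: T_nth)
  qed (simp add: T_nth)
qed

lemma germsI: "(\<lambda>w. f (z0 + w)) has_laurent_expansion F \<Longrightarrow> F \<in> germs z0"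
  unfolding germs_def by blast

lemma germsE: assumes "F \<in> germs z0" obtains f where "(\<lambda>w. f (z0 + w)) has_laurent_expansion F"
  using assms unfolding germs_def by blast

lemma germs_add: assumes "F \<in> germs z0" "G \<in> germs z0" shows "F + G \<in> germs z0"
proof -
  obtain f where f: "(\<lambda>w. f (z0 + w)) has_laurent_expansion F" using assms(1) by (rule germsE)
  obtain g where g: "(\<lambda>w. g (z0 + w)) has_laurent_expansion G" using assms(2) by (rule germsE)
  have "(\<lambda>w. (\<lambda>z. f z + g z) (z0 + w)) has_laurent_expansion F + G"
    using has_laurent_expansion_add[OF f g] by simp
  then show ?thesis by (rule germsI)
qed

lemma germs_mult: assumes "F \<in> germs z0" "G \<in> germs z0" shows "F * G \<in> germs z0"
proof -
  obtain f where f: "(\<lambda>w. f (z0 + w)) has_laurent_expansion F" using assms(1) by (rule germsE)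
  obtain g where g: "(\<lambda>w. g (z0 + w)) has_laurent_expansion G" using assms(2) by (rule germsE)
  have "(\<lambda>w. (\<lambda>z. f z * g z) (z0 + w)) has_laurent_expansion F * G"
    using has_laurent_expansion_mult[OF f g] by simp
  then show ?thesis by (rule germsI)
qed

lemma germs_uminus: assumes "F \<in> germs z0" shows "- F \<in> germs z0"
proof -
  obtain f where f: "(\<lambda>w. f (z0 + w)) has_laurent_expansion F" using assms(1) by (rule germsE)
  have "(\<lambda>w. (\<lambda>z. - f z) (z0 + w)) has_laurent_expansion - F"
    using has_laurent_expansion_minus[OF f] by simp
  then show ?thesis by (rule germsI)
qed

lemma germs_const: "fls_const c \<in> germs z0"
proof -
  have "(\<lambda>w. (\<lambda>_. c) (z0 + w)) has_laurent_expansion fls_const c" by simp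
  then show ?thesis by (rule germsI)
qed

lemma germs_one: "1 \<in> germs z0"
  using germs_const[of 1] by (simp only: fls_const_1)

lemma germs_zero: "0 \<in> germs z0"
  using germs_const[of 0] by (simp only: fls_const_0)

lemma germs_sum: "(\<And>a. a \<in> A \<Longrightarrow> f a \<in> germs z0) \<Longrightarrow> sum f A \<in> germs z0"
  by (induction A rule: infinite_finite_induct) (auto simp: germs_zero germs_add)

lemma germs_diff: "F \<in> germs z0 \<Longrightarrow> G \<in> germs z0 \<Longrightarrow> F - G \<in> germs z0"
proof -
  assume a: "F \<in> germs z0" "G \<in> germs z0"
  have "F + - G \<in> germs z0" by (intro germs_add germs_uminus a)
  then show ?thesis by (simp only: diff_conv_add_uminus)
qed

lemma germs_regpart: assumes "F \<in> germs z0" shows "fps_to_fls (fls_regpart F) \<in> germs z0"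
proof -
  from assms obtain f where f: "(\<lambda>w. f (z0 + w)) has_laurent_expansion F" by (rule germsE)
  then have "fls_conv_radius F > 0" by (simp add: has_laurent_expansion_def)
  then have "fps_conv_radius (fls_regpart F) > 0" by (simp add: fps_conv_radius_fls_regpart)
  then have "eval_fps (fls_regpart F) has_fps_expansion fls_regpart F" by (rule eval_fps_has_fps_expansion)
  then have "eval_fps (fls_regpart F) has_laurent_expansion fps_to_fls (fls_regpart F)"
    by (rule has_laurent_expansion_fps)
  then have "(\<lambda>w. (\<lambda>z. eval_fps (fls_regpart F) (z - z0)) (z0 + w)) has_laurent_expansion fps_to_fls (fls_regpart F)"
    by simp
  then show ?thesis by (rule germsI)
qed

lemma germs_T: "F \<in> germs z0 \<Longrightarrow> T F \<in> germs z0"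
  unfolding T_def by (intro germs_diff germs_regpart)

lemma germs_r_lext: "(\<And>a. a \<in> Poly_Mapping.keys x \<Longrightarrow> f a \<in> germs z0) \<Longrightarrow> r_lext f x \<in> germs z0"
  unfolding r_lext_def by (intro germs_sum germs_mult germs_const) auto




lemma lookup_pm_lext: "Poly_Mapping.lookup (pm_lext g x) w = (\<Sum>p\<in>Poly_Mapping.keys x. Poly_Mapping.lookup x p * Poly_Mapping.lookup (g p) w)"
  by (simp add: pm_lext_def lookup_sum)

lemma fls_nth_sum: "fls_nth (sum f A) n = (\<Sum>a\<in>A. fls_nth (f a) n)"
  by (induction A rule: infinite_finite_induct) auto

lemma fls_nth_r_lext: "fls_nth (r_lext f x) n = (\<Sum>a\<in>Poly_Mapping.keys x. Poly_Mapping.lookup x a * fls_nth (f a) n)"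
  by (simp add: r_lext_def fls_nth_sum)

lemma NEG_r_lext: "(\<And>a. a \<in> Poly_Mapping.keys x \<Longrightarrow> NEG (f a)) \<Longrightarrow> NEG (r_lext f x)"
  by (simp add: NEG_def fls_nth_r_lext)

lemma POS_r_lext: "(\<And>a. a \<in> Poly_Mapping.keys x \<Longrightarrow> POS (f a)) \<Longrightarrow> POS (r_lext f x)"
  by (simp add: POS_def fls_nth_r_lext)

lemma POS_one: "POS 1" by (simp add: POS_def)

lemma cop_left:
  fixes deg :: "'b \<Rightarrow> nat"
  assumes grad: "\<forall>b. \<forall>(u, v)\<in>Poly_Mapping.keys (cop b). deg u + deg v = deg b"
    and dege: "\<forall>b. deg b = 0 \<longleftrightarrow> b = e"
    and cou: "\<forall>x. pm_lext (\<lambda>(u, v). pm_smult (cou u) (bvec v)) (Delta cop x) = x"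
    and coue: "cou e = 1"
    and dw: "deg w = deg v"
  shows "Poly_Mapping.lookup (cop v) (e, w) = (if w = v then 1 else 0)"
proof -
  let ?L = "Poly_Mapping.lookup (cop v)"
  have ax: "pm_lext (\<lambda>(u, v). pm_smult (cou u) (bvec v)) (cop v) = bvec v"
    using cou[rule_format, of "bvec v"] by (simp add: Delta_def)
  have "Poly_Mapping.lookup (bvec v) w = (\<Sum>p\<in>Poly_Mapping.keys (cop v). ?L p * Poly_Mapping.lookup ((\<lambda>(u, v). pm_smult (cou u) (bvec v)) p) w)"
    by (subst ax[symmetric]) (simp add: lookup_pm_lext)
  also have "\<dots> = (\<Sum>p\<in>Poly_Mapping.keys (cop v). if p = (e, w) then ?L p else 0)"
  proof (rule sum.cong[OF refl])
    fix p assume p: "p \<in> Poly_Mapping.keys (cop v)"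
    obtain u w' where pu: "p = (u, w')" by (cases p)
    show "?L p * Poly_Mapping.lookup ((\<lambda>(u, v). pm_smult (cou u) (bvec v)) p) w = (if p = (e, w) then ?L p else 0)"
    proof (cases "w' = w")
      case True
      from grad p have "case p of (a, b) \<Rightarrow> deg a + deg b = deg v" by blast
      with pu True dw have "deg u = 0" by auto
      with dege have "u = e" by simp
      then show ?thesis using pu True coue by (simp add: lookup_bvec)
    next
      case False then show ?thesis using pu by (auto simp: lookup_bvec)
    qed
  qed
  also have "\<dots> = ?L (e, w)"
    by (simp add: in_keys_iff)
  finally show ?thesis by (simp add: lookup_bvec)
qed

lemma cop_right:
  fixes deg :: "'b \<Rightarrow> nat"
  assumes grad: "\<forall>b. \<forall>(u, v)\<in>Poly_Mapping.keys (cop b). deg u + deg v = deg b"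
    and dege: "\<forall>b. deg b = 0 \<longleftrightarrow> b = e"
    and cou: "\<forall>x. pm_lext (\<lambda>(u, v). pm_smult (cou v) (bvec u)) (Delta cop x) = x"
    and coue: "cou e = 1"
    and dw: "deg w = deg v"
  shows "Poly_Mapping.lookup (cop v) (w, e) = (if w = v then 1 else 0)"
proof -
  let ?L = "Poly_Mapping.lookup (cop v)"
  have ax: "pm_lext (\<lambda>(u, v). pm_smult (cou v) (bvec u)) (cop v) = bvec v"
    using cou[rule_format, of "bvec v"] by (simp add: Delta_def)
  have "Poly_Mapping.lookup (bvec v) w = (\<Sum>p\<in>Poly_Mapping.keys (cop v). ?L p * Poly_Mapping.lookup ((\<lambda>(u, v). pm_smult (cou v) (bvec u)) p) w)"
    by (subst ax[symmetric]) (simp add: lookup_pm_lext)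
  also have "\<dots> = (\<Sum>p\<in>Poly_Mapping.keys (cop v). if p = (w, e) then ?L p else 0)"
  proof (rule sum.cong[OF refl])
    fix p assume p: "p \<in> Poly_Mapping.keys (cop v)"
    obtain u w' where pu: "p = (w', u)" by (cases p)
    show "?L p * Poly_Mapping.lookup ((\<lambda>(u, v). pm_smult (cou v) (bvec u)) p) w = (if p = (w, e) then ?L p else 0)"
    proof (cases "w' = w")
      case True
      from grad p have "case p of (a, b) \<Rightarrow> deg a + deg b = deg v" by blast
      with pu True dw have "deg u = 0" by auto
      with dege have "u = e" by simp
      then show ?thesis using pu True coue by (simp add: lookup_bvec)
    next
      case False then show ?thesis using pu by (auto simp: lookup_bvec)
    qed
  qed
  also have "\<dots> = ?L (w, e)"
    by (simp add: in_keys_iff)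
  finally show ?thesis by (simp add: lookup_bvec)
qed




lemma red_keys:
  fixes deg :: "'b \<Rightarrow> nat"
  assumes grad: "\<forall>b. \<forall>(u, v)\<in>Poly_Mapping.keys (cop b). deg u + deg v = deg b"
    and dege: "\<forall>b. deg b = 0 \<longleftrightarrow> b = e"
    and coul: "\<forall>x. pm_lext (\<lambda>(u, v). pm_smult (cou u) (bvec v)) (Delta cop x) = x"
    and cour: "\<forall>x. pm_lext (\<lambda>(u, v). pm_smult (cou v) (bvec u)) (Delta cop x) = x"
    and coue: "cou e = 1"
    and dv: "deg v \<ge> 1"
    and p: "p \<in> Poly_Mapping.keys (red_cop cop e v)"
  shows "fst p \<noteq> e \<and> snd p \<noteq> e \<and> deg (fst p) + deg (snd p) = deg v"
proof -
  obtain u w where pu: "p = (u, w)" by (cases p)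
  let ?L = "Poly_Mapping.lookup (cop v)"
  have ve: "v \<noteq> e" using dege dv by auto
  have lk: "Poly_Mapping.lookup (red_cop cop e v) (u, w) = ?L (u, w) - (if (u, w) = (v, e) then 1 else 0) - (if (u, w) = (e, v) then 1 else 0)"
    by (simp add: red_cop_def lookup_minus lookup_bvec)
  have nz: "Poly_Mapping.lookup (red_cop cop e v) (u, w) \<noteq> 0" using p pu by (simp add: in_keys_iff)
  have L1: "?L (v, e) = 1" using cop_right[OF grad dege cour coue, of v v] by simp
  have L2: "?L (e, v) = 1" using cop_left[OF grad dege coul coue, of v v] by simp
  have ink: "(u, w) \<in> Poly_Mapping.keys (cop v)"
  proof (rule ccontr)
    assume "(u, w) \<notin> Poly_Mapping.keys (cop v)"
    then have z: "?L (u, w) = 0" by (simp add: in_keys_iff)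
    with nz lk have "(u, w) = (v, e) \<or> (u, w) = (e, v)" by (auto split: if_splits)
    with z L1 L2 show False by auto
  qed
  from grad ink have ds: "deg u + deg w = deg v" by blast
  have ue: "u \<noteq> e"
  proof
    assume u: "u = e"
    with ds dege have "deg w = deg v" by auto
    then have "?L (e, w) = (if w = v then 1 else 0)" by (rule cop_left[OF grad dege coul coue])
    with lk nz u ve show False by (auto split: if_splits)
  qed
  have we: "w \<noteq> e"
  proof
    assume u: "w = e"
    with ds dege have "deg u = deg v" by auto
    then have "?L (u, e) = (if u = v then 1 else 0)" by (rule cop_right[OF grad dege cour coue])
    with lk nz u ve show False by (auto split: if_splits)
  qed
  show ?thesis using ue we ds pu by simp
qed

lemma m_tensor_bvec: "m_tensor f g (bvec p) = f (fst p) * g (snd p)"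
  by (simp add: m_tensor_eq)

lemma m_tensor_add: "m_tensor f g (x + y) = m_tensor f g x + m_tensor f g y"
  by (simp add: m_tensor_eq r_lext_add)

lemma m_tensor_pm_lext: "m_tensor f g (pm_lext cop x) = r_lext (\<lambda>c. m_tensor f g (cop c)) x"
  by (simp add: m_tensor_eq r_lext_pm_lext)




theorem mainTheorem1:
  fixes deg :: "'b \<Rightarrow> nat" and mu :: "'b \<Rightarrow> 'b \<Rightarrow> ('b \<Rightarrow>\<^sub>0 complex)" and e :: 'b
    and cop :: "'b \<Rightarrow> ('b \<times> 'b \<Rightarrow>\<^sub>0 complex)" and cou :: "'b \<Rightarrow> complex"
    and ant :: "'b \<Rightarrow> ('b \<Rightarrow>\<^sub>0 complex)"
    and z0 :: complex and phi phim phip :: "'b \<Rightarrow> complex fls"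
  assumes hopf: "graded_connected_comm_hopf deg mu e cop cou ant"
    and phi: "unital_alg_hom_R z0 mu e phi"
    and phim_unit: "phim e = 1" and phip_unit: "phip e = 1"
    and phim_rec: "\<And>b. deg b \<ge> 1 \<Longrightarrow>
        phim b = - T (phi b + m_tensor phim phi (red_cop cop e b))"
    and phip_rec: "\<And>b. deg b \<ge> 1 \<Longrightarrow>
        phip b = phi b + phim b + m_tensor phim phi (red_cop cop e b)"
  shows "unital_alg_hom_R z0 mu e phim \<and> unital_alg_hom_R z0 mu e phip
    \<and> (\<forall>x. (\<exists>n\<ge>1. \<forall>b\<in>Poly_Mapping.keys x. deg b = n) \<longrightarrow> r_lext phim x \<in> Rminus z0)
    \<and> (\<forall>x. r_lext phip x \<in> Rplus z0)
    \<and> (\<forall>x. r_lext phip x = convolution cop phim phi x)"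
proof -
  note H = hopf[unfolded graded_connected_comm_hopf_def]
  have comm: "\<forall>x y. hmul mu x y = hmul mu y x" using H by (elim conjE) assumption
  have unitl: "\<forall>x. hmul mu (bvec e) x = x" using H by (elim conjE) assumption
  have degmu: "\<forall>a b. \<forall>c\<in>Poly_Mapping.keys (mu a b). deg c = deg a + deg b" using H by (elim conjE) assumption
  have dege: "\<forall>b. deg b = 0 \<longleftrightarrow> b = e" using H by (elim conjE) assumption
  have grad: "\<forall>b. \<forall>(u, v)\<in>Poly_Mapping.keys (cop b). deg u + deg v = deg b" using H by (elim conjE) assumption
  have coul: "\<forall>x. pm_lext (\<lambda>(u, v). pm_smult (cou u) (bvec v)) (Delta cop x) = x" using H by (elim conjE) assumption
  have cour: "\<forall>x. pm_lext (\<lambda>(u, v). pm_smult (cou v) (bvec u)) (Delta cop x) = x" using H by (elim conjE) assumption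
  have Dmult: "\<forall>x y. Delta cop (hmul mu x y) = tmul mu (Delta cop x) (Delta cop y)" using H by (elim conjE) assumption
  have Dunit: "Delta cop (bvec e) = bvec (e, e)" using H by (elim conjE) assumption
  have coue: "cou e = 1" using H by (elim conjE) assumption
  note P = phi[unfolded unital_alg_hom_R_def]
  have phi_germ: "\<And>b. phi b \<in> germs z0" using P by (elim conjE) blast
  have phi1: "r_lext phi (bvec e) = 1" using P by (elim conjE) assumption
  have phimul: "\<And>x y. r_lext phi (hmul mu x y) = r_lext phi x * r_lext phi y" using P by (elim conjE) blast
  have phie: "phi e = 1" using phi1 by simp
  have mu_el: "mu e b = bvec b" for b using unitl[rule_format, of "bvec b"] by (simp only: hmul_bvec)
  have mu_er: "mu a e = bvec a" for a
    using comm[rule_format, of "bvec a" "bvec e"] unitl[rule_format, of "bvec a"] by (simp only: hmul_bvec)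
  have phi_mu: "\<And>a b. r_lext phi (mu a b) = phi a * phi b"
    using phimul[of "bvec a" "bvec b" for a b] by (simp add: hmul_bvec)
  have cope: "cop e = bvec (e, e)" using Dunit by (simp add: Delta_def)
  have deg_e: "deg e = 0" using dege by simp
  have pos_deg: "deg b \<ge> 1" if "b \<noteq> e" for b using dege[rule_format, of b] that by auto
  have redk: "\<And>v p. deg v \<ge> 1 \<Longrightarrow> p \<in> Poly_Mapping.keys (red_cop cop e v) \<Longrightarrow>
       fst p \<noteq> e \<and> snd p \<noteq> e \<and> deg (fst p) + deg (snd p) = deg v"
    by (rule red_keys[OF grad dege coul cour coue])
  have redk_lt: "deg (fst p) < deg v" if "deg v \<ge> 1" "p \<in> Poly_Mapping.keys (red_cop cop e v)" for v p
  proof -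
    from redk[OF that] have "snd p \<noteq> e" "deg (fst p) + deg (snd p) = deg v" by auto
    with pos_deg[of "snd p"] show ?thesis by simp
  qed
  have copk: "deg (fst p) \<le> deg v" if "p \<in> Poly_Mapping.keys (cop v)" for v p
  proof -
    from grad that have "case p of (a, b) \<Rightarrow> deg a + deg b = deg v" by blast
    then show ?thesis by (cases p) auto
  qed
  have cop_dec: "\<And>c. cop c = bvec (c, e) + (red_cop cop e c + bvec (e, c))"
    by (simp add: red_cop_def)
  define m where "m = m_tensor phim phi"
  have m_red: "\<And>c. m (red_cop cop e c + bvec (e, c)) = m (red_cop cop e c) + phi c"
    by (simp add: m_def m_tensor_add m_tensor_bvec phim_unit)
  have psi: "m (cop c) = phip c" for c
  proof (cases "c = e")
    case True then show ?thesis by (simp add: m_def cope m_tensor_bvec phim_unit phie phip_unit)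
  next
    case False
    then have "deg c \<ge> 1" by (rule pos_deg)
    then show ?thesis
      by (subst cop_dec) (simp add: m_tensor_add m_red[unfolded m_def] m_def m_tensor_bvec phie phip_rec phim_unit algebra_simps)
  qed
  have phim_T: "phim c = - T (phip c - phim c)" if "deg c \<ge> 1" for c
    using phim_rec[OF that] phip_rec[OF that] by simp
  have phim_NEG: "NEG (phim c)" if "deg c \<ge> 1" for c
    using phim_rec[OF that] by (simp add: NEG_uminus NEG_T)
  have phip_POS: "POS (phip c)" for c
  proof (cases "c = e")
    case True then show ?thesis by (simp add: phip_unit POS_one)
  next
    case False
    then have d: "deg c \<ge> 1" by (rule pos_deg)
    have "phip c = (phi c + m_tensor phim phi (red_cop cop e c)) - T (phi c + m_tensor phim phi (red_cop cop e c))"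
      using phip_rec[OF d] phim_rec[OF d] by simp
    then show ?thesis by (simp add: POS_sub_T)
  qed
  have phim_germ: "phim c \<in> germs z0" for c
  proof (induction "deg c" arbitrary: c rule: less_induct)
    case less
    show ?case
    proof (cases "c = e")
      case True then show ?thesis by (simp add: phim_unit germs_one)
    next
      case False
      then have d: "deg c \<ge> 1" by (rule pos_deg)
      have "m_tensor phim phi (red_cop cop e c) \<in> germs z0"
        unfolding m_tensor_eq
        by (intro germs_r_lext germs_mult phi_germ less redk_lt[OF d])
      then show ?thesis
        by (simp add: phim_rec[OF d] germs_uminus germs_T germs_add phi_germ)
    qed
  qed
  have phip_germ: "phip c \<in> germs z0" for c
  proof (cases "c = e")
    case True then show ?thesis by (simp add: phip_unit germs_one)
  next
    case False
    then have d: "deg c \<ge> 1" by (rule pos_deg)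
    have "m_tensor phim phi (red_cop cop e c) \<in> germs z0"
      unfolding m_tensor_eq by (intro germs_r_lext germs_mult phi_germ phim_germ)
    then show ?thesis
      by (simp add: phip_rec[OF d] germs_add phi_germ phim_germ)
  qed
  have conv: "r_lext phip x = convolution cop phim phi x" for x
    by (simp add: convolution_def Delta_def m_tensor_pm_lext psi[unfolded m_def])
  have BF: "m (tmul mu s t) = r_lext (\<lambda>p. r_lext (\<lambda>q. r_lext phim (mu (fst p) (fst q)) * r_lext phi (mu (snd p) (snd q))) t) s" for s t
    by (simp add: m_def m_tensor_tmul)
  have m_r: "m s = r_lext (\<lambda>p. phim (fst p) * phi (snd p)) s" for s
    by (simp add: m_def m_tensor_eq)
  have mulm: "r_lext phim (mu a b) = phim a * phim b" if "deg a + deg b = n" for n a b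
    using that
  proof (induction n arbitrary: a b rule: less_induct)
    case (less n a b)
    show ?case
    proof (cases "a = e \<or> b = e")
      case True
      then show ?thesis by (auto simp: mu_el mu_er phim_unit)
    next
      case False
      then have da: "deg a \<ge> 1" and db: "deg b \<ge> 1" using pos_deg by auto
      define F where "F = r_lext phim (mu a b)"
      have kmu: "deg c \<ge> 1" if "c \<in> Poly_Mapping.keys (mu a b)" for c
        using degmu that da by auto
      have F1: "F = - T (r_lext phip (mu a b) - F)"
      proof -
        have "F = r_lext (\<lambda>c. - T (phip c - phim c)) (mu a b)"
          unfolding F_def by (rule r_lext_cong) (rule phim_T[OF kmu])
        also have "\<dots> = - T (r_lext phip (mu a b) - F)"
          by (simp add: r_lext_fminus r_lext_T r_lext_fdiff F_def)
        finally show ?thesis .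
      qed
      have F2: "r_lext phip (mu a b) = m (tmul mu (cop a) (cop b))"
      proof -
        have "r_lext phip (mu a b) = r_lext (\<lambda>c. m (cop c)) (mu a b)" by (simp add: psi)
        also have "\<dots> = m (pm_lext cop (mu a b))" by (simp add: m_def m_tensor_pm_lext)
        also have "pm_lext cop (mu a b) = Delta cop (hmul mu (bvec a) (bvec b))"
          by (simp add: hmul_bvec Delta_def)
        also have "\<dots> = tmul mu (cop a) (cop b)" using Dmult by (simp add: Delta_def)
        finally show ?thesis .
      qed
      define A' where "A' = red_cop cop e a + bvec (e, a)"
      define B' where "B' = red_cop cop e b + bvec (e, b)"
      have ca: "cop a = bvec (a, e) + A'" unfolding A'_def by (rule cop_dec)
      have cb: "cop b = bvec (b, e) + B'" unfolding B'_def by (rule cop_dec)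
      have kA: "deg (fst p) < deg a" if "p \<in> Poly_Mapping.keys A'" for p
      proof -
        from that keys_add[of "red_cop cop e a" "bvec (e, a)"] have "p \<in> Poly_Mapping.keys (red_cop cop e a) \<or> p = (e, a)"
          unfolding A'_def by auto
        then show ?thesis
        proof
          assume "p \<in> Poly_Mapping.keys (red_cop cop e a)" then show ?thesis by (rule redk_lt[OF da])
        next
          assume "p = (e, a)" then show ?thesis using deg_e da by simp
        qed
      qed
      have kB: "deg (fst p) < deg b" if "p \<in> Poly_Mapping.keys B'" for p
      proof -
        from that keys_add[of "red_cop cop e b" "bvec (e, b)"] have "p \<in> Poly_Mapping.keys (red_cop cop e b) \<or> p = (e, b)"
          unfolding B'_def by auto
        then show ?thesis
        proof
          assume "p \<in> Poly_Mapping.keys (red_cop cop e b)" then show ?thesis by (rule redk_lt[OF db])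
        next
          assume "p = (e, b)" then show ?thesis using deg_e db by simp
        qed
      qed
      let ?K = "\<lambda>p q. r_lext phim (mu (fst p) (fst q)) * r_lext phi (mu (snd p) (snd q))"
      have "m (tmul mu (cop a) (cop b)) = r_lext (\<lambda>p. r_lext (?K p) (cop b)) (bvec (a, e)) + r_lext (\<lambda>p. r_lext (?K p) (cop b)) A'"
        by (simp add: BF ca r_lext_add)
      also have "r_lext (\<lambda>p. r_lext (?K p) (cop b)) (bvec (a, e)) = ?K (a, e) (b, e) + r_lext (?K (a, e)) B'"
        by (simp add: cb r_lext_add)
      also have "?K (a, e) (b, e) = F" by (simp add: F_def mu_el phie)
      also have "r_lext (?K (a, e)) B' = r_lext (\<lambda>q. phim a * (phim (fst q) * phi (snd q))) B'"
      proof (rule r_lext_cong)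
        fix q assume q: "q \<in> Poly_Mapping.keys B'"
        have "r_lext phim (mu a (fst q)) = phim a * phim (fst q)"
          using kB[OF q] less.prems by (intro less.IH[of "deg a + deg (fst q)"]) auto
        then show "?K (a, e) q = phim a * (phim (fst q) * phi (snd q))" by (simp add: mu_el)
      qed
      also have "\<dots> = phim a * m B'" by (simp add: r_lext_cmult m_r)
      also have "r_lext (\<lambda>p. r_lext (?K p) (cop b)) A' = r_lext (\<lambda>p. r_lext (\<lambda>q. (phim (fst p) * phi (snd p)) * (phim (fst q) * phi (snd q))) (cop b)) A'"
      proof (rule r_lext_cong, rule r_lext_cong)
        fix p q assume p: "p \<in> Poly_Mapping.keys A'" and q: "q \<in> Poly_Mapping.keys (cop b)"
        have "r_lext phim (mu (fst p) (fst q)) = phim (fst p) * phim (fst q)"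
          using kA[OF p] copk[OF q] less.prems by (intro less.IH[of "deg (fst p) + deg (fst q)"]) auto
        then show "?K p q = (phim (fst p) * phi (snd p)) * (phim (fst q) * phi (snd q))"
          by (simp add: phi_mu mult_ac)
      qed
      also have "\<dots> = m A' * m (cop b)" by (simp add: r_lext_prod m_r)
      finally have F3: "r_lext phip (mu a b) = F + phim a * m B' + m A' * m (cop b)"
        using F2 by simp
      have mA: "m A' = phip a - phim a" using psi[of a] by (simp add: ca m_def m_tensor_add m_tensor_bvec phie algebra_simps)
      have mB: "m B' = phip b - phim b" using psi[of b] by (simp add: cb m_def m_tensor_add m_tensor_bvec phie algebra_simps)
      have F4: "r_lext phip (mu a b) - F = phip a * phip b - phim a * phim b"
        using F3 by (simp add: mA mB psi algebra_simps)
      have "F = - (T (phip a * phip b) - T (phim a * phim b))"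
        using F1 by (simp add: F4 T_diff)
      also have "T (phip a * phip b) = 0" by (rule T_POS_mult[OF phip_POS phip_POS])
      also have "T (phim a * phim b) = phim a * phim b" by (rule T_NEG_mult[OF phim_NEG[OF da] phim_NEG[OF db]])
      finally show ?thesis by (simp add: F_def)
    qed
  qed
  have mulm': "r_lext phim (mu a b) = phim a * phim b" for a b by (rule mulm) (rule refl)
  have C1: "unital_alg_hom_R z0 mu e phim"
    unfolding unital_alg_hom_R_def
    by (simp add: phim_germ phim_unit r_lext_hmul mulm' r_lext_prod)
  have C2: "unital_alg_hom_R z0 mu e phip"
  proof -
    have "r_lext phip (hmul mu x y) = r_lext phip x * r_lext phip y" for x y
    proof -
      have "r_lext phip (hmul mu x y) = m (tmul mu (Delta cop x) (Delta cop y))"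
        by (simp add: conv convolution_def m_def Dmult)
      also have "\<dots> = r_lext (\<lambda>p. r_lext (\<lambda>q. (phim (fst p) * phi (snd p)) * (phim (fst q) * phi (snd q))) (Delta cop y)) (Delta cop x)"
        by (simp add: BF mulm' phi_mu mult_ac)
      also have "\<dots> = r_lext phip x * r_lext phip y"
        by (simp add: r_lext_prod m_r[symmetric] conv convolution_def m_def)
      finally show ?thesis .
    qed
    then show ?thesis unfolding unital_alg_hom_R_def by (simp add: phip_germ phip_unit)
  qed
  have C3: "\<forall>x. (\<exists>n\<ge>1. \<forall>b\<in>Poly_Mapping.keys x. deg b = n) \<longrightarrow> r_lext phim x \<in> Rminus z0"
  proof (intro allI impI)
    fix x :: "'b \<Rightarrow>\<^sub>0 complex" assume "\<exists>n\<ge>1. \<forall>b\<in>Poly_Mapping.keys x. deg b = n"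
    then have k: "deg b \<ge> 1" if "b \<in> Poly_Mapping.keys x" for b using that by auto
    have "NEG (r_lext phim x)" by (rule NEG_r_lext) (rule phim_NEG[OF k])
    moreover have "r_lext phim x \<in> germs z0" by (rule germs_r_lext) (rule phim_germ)
    ultimately show "r_lext phim x \<in> Rminus z0" by (simp add: Rminus_def NEG_def)
  qed
  have C4: "\<forall>x. r_lext phip x \<in> Rplus z0"
  proof
    fix x :: "'b \<Rightarrow>\<^sub>0 complex"
    have "POS (r_lext phip x)" by (rule POS_r_lext) (rule phip_POS)
    moreover have "r_lext phip x \<in> germs z0" by (rule germs_r_lext) (rule phip_germ)
    ultimately show "r_lext phip x \<in> Rplus z0" by (simp add: Rplus_def POS_def)
  qed
  show ?thesis using C1 C2 C3 C4 conv by blast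
qed

end
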